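(* Let $\varepsilon>0$, $w>0$, $\delta>0$, and run $\textsc{ApproxGeneral}(\varepsilon,\delta,w)$ with any $(1+w)$-approximate oracle. Then for every $i=1,\dots,\tau$, $$\alpha^L(i)\le\delta L\,e^{\varepsilon(1+w)f_i/\beta}.$$
   Context: Let $G=(V,E)$ be a finite directed graph with capacities $c:E\to\mathbb{R}_{>0}$, edge lengths $\ell:E\to\mathbb{Z}_{\ge1}$, distinct vertices $s,t$, and a positive integer $L$. Let $\mathcal{P}_L$ be the set of directed simple $s$-$t$ paths $P$ with $\ell(P)=\sum_{e\in P}\ell(e)\le L$, and assume $\mathcal{P}_L\ne\emptyset$. For $y:E\to\mathbb{R}_{\ge0}$ let $y(P)=\sum_{e\in P}y(e)$ and $d^L_y(s,t)=\min_{P\in\mathcal{P}_L}y(P)$. Let $\beta$ be the optimum of the LP $\min\{\sum_e c(e)y(e): y\ge0,\ y(P)\ge1\ \forall P\in\mathcal{P}_L\}$. A $(1+w)$-approximate oracle ($w>0$) is a map $\mathcal{O}$ assigning to each $y:E\to\mathbb{R}_{\ge0}$ a path $\mathcal{O}(y)\in\mathcal{P}_L$ with $y(\mathcal{O}(y))\le(1+w)\,d^L_y(s,t)$. Algorithm $\textsc{ApproxGeneral}(\varepsilon,\delta,w)$: - Initialize $i=0$, $y_0\equiv\delta$, and $x_0\equiv0$. Let $\alpha^L(i)=d^L_{y_i}(s,t)$ and $\bar\alpha^L(i)=y_i(\mathcal{O}(y_i))$. - While $\bar\alpha^L(i)<1+w$: - set $i\leftarrow i+1$; - let $P_i=\mathcal{O}(y_{i-1})$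 and $c_i=\min_{e\in P_i}c(e)$; - set $x_i=x_{i-1}$ except $x_i(P_i)=x_{i-1}(P_i)+c_i$; - set $y_i(e)=y_{i-1}(e)(1+\varepsilon c_i/c(e))$ for $e\in P_i$, and $y_i(e)=y_{i-1}(e)$ otherwise. - Return $x_i$. $\tau$ is the number of iterations, and $f_i=\sum_Px_i(P)$. *)

theory Defs
  imports Complex_Main
begin

definition is_st_path ::
  "'e set \<Rightarrow> ('e \<Rightarrow> 'v) \<Rightarrow> ('e \<Rightarrow> 'v) \<Rightarrow> 'v \<Rightarrow> 'v \<Rightarrow> 'e list \<Rightarrow> bool" where
  "is_st_path E src dst s t P \<longleftrightarrow>
     P \<noteq> [] \<and> set P \<subseteq> E \<and>
     src (hd P) = s \<and> dst (last P) = t \<and>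
     (\<forall>k. Suc k < length P \<longrightarrow> dst (P ! k) = src (P ! Suc k)) \<and>
     distinct (map src P @ [dst (last P)])"

definition paths_L ::
  "'e set \<Rightarrow> ('e \<Rightarrow> 'v) \<Rightarrow> ('e \<Rightarrow> 'v) \<Rightarrow> 'v \<Rightarrow> 'v \<Rightarrow> ('e \<Rightarrow> nat) \<Rightarrow> nat \<Rightarrow> 'e list set" where
  "paths_L E src dst s t len L =
     {P. is_st_path E src dst s t P \<and> (\<Sum>e\<leftarrow>P. len e) \<le> L}"

definition pweight :: "('e \<Rightarrow> real) \<Rightarrow> 'e list \<Rightarrow> real" where
  "pweight y P = (\<Sum>e\<leftarrow>P. y e)"

definition distL :: "'e list set \<Rightarrow> ('e \<Rightarrow> real) \<Rightarrow> real" where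
  "distL PL y = Min (pweight y ` PL)"

definition lp_beta :: "'e set \<Rightarrow> ('e \<Rightarrow> real) \<Rightarrow> 'e list set \<Rightarrow> real" where
  "lp_beta E c PL = Inf {(\<Sum>e\<in>E. c e * y e) | y.
      (\<forall>e\<in>E. 0 \<le> y e) \<and> (\<forall>P\<in>PL. 1 \<le> pweight y P)}"

definition approx_oracle ::
  "'e set \<Rightarrow> 'e list set \<Rightarrow> real \<Rightarrow> (('e \<Rightarrow> real) \<Rightarrow> 'e list) \<Rightarrow> bool" where
  "approx_oracle E PL w orc \<longleftrightarrow>
     (\<forall>y. (\<forall>e\<in>E. 0 \<le> y e) \<longrightarrow>
        orc y \<in> PL \<and> pweight y (orc y) \<le> (1 + w) * distL PL y)"

definition bottleneck :: "('e \<Rightarrow> real) \<Rightarrow> 'e list \<Rightarrow> real" where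
  "bottleneck c P = Min (c ` set P)"

fun ag_y :: "('e \<Rightarrow> real) \<Rightarrow> (('e \<Rightarrow> real) \<Rightarrow> 'e list) \<Rightarrow> real \<Rightarrow> real \<Rightarrow> nat \<Rightarrow> 'e \<Rightarrow> real" where
  "ag_y c orc eps delta 0 = (\<lambda>e. delta)"
| "ag_y c orc eps delta (Suc i) =
     (let y = ag_y c orc eps delta i; P = orc y; ci = bottleneck c P in
      (\<lambda>e. if e \<in> set P then y e * (1 + eps * ci / c e) else y e))"

fun ag_x :: "('e \<Rightarrow> real) \<Rightarrow> (('e \<Rightarrow> real) \<Rightarrow> 'e list) \<Rightarrow> real \<Rightarrow> real \<Rightarrow> nat \<Rightarrow> 'e list \<Rightarrow> real" where
  "ag_x c orc eps delta 0 = (\<lambda>P. 0)"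
| "ag_x c orc eps delta (Suc i) =
     (let x = ag_x c orc eps delta i; P = orc (ag_y c orc eps delta i) in
      x(P := x P + bottleneck c P))"

end

theory Submission
  imports Defs
begin

lemma length_le_sumlen:
  assumes "\<forall>e\<in>set P. 1 \<le> len e"
  shows "length P \<le> (\<Sum>e\<leftarrow>P. (len e::nat))"
  using assms by (induction P) auto

lemma pw_set: "distinct P \<Longrightarrow> pweight Y P = sum Y (set P)"
  by (simp add: pweight_def sum_list_distinct_conv_sum_set)

lemma sum_upd_in:
  fixes f :: "'a \<Rightarrow> real"
  assumes "finite A" "p \<in> A"
  shows "sum (f(p := v)) A = sum f A + (v - f p)"
proof -
  have "sum (f(p := v)) A = (f(p:=v)) p + sum (f(p := v)) (A - {p})"
    using assms by (simp add: sum.remove)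
  also have "sum (f(p := v)) (A - {p}) = sum f (A - {p})"
    by (rule sum.cong) auto
  finally have 1: "sum (f(p := v)) A = v + sum f (A - {p})" by simp
  have "sum f A = f p + sum f (A - {p})" using assms by (simp add: sum.remove)
  with 1 show ?thesis by simp
qed

theorem mainTheorem8:
  fixes E :: "'e set" and src dst :: "'e \<Rightarrow> 'v" and s t :: 'v
    and c :: "'e \<Rightarrow> real" and len :: "'e \<Rightarrow> nat" and L :: nat
    and orc :: "('e \<Rightarrow> real) \<Rightarrow> 'e list"
    and eps w delta :: real and i :: nat
  assumes "finite E"
    and "\<forall>e\<in>E. 0 < c e"
    and "\<forall>e\<in>E. 1 \<le> len e"
    and "s \<noteq> t" and "0 < L"
    and "paths_L E src dst s t len L \<noteq> {}"
    and "0 < eps" and "0 < w" and "0 < delta"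
    and "approx_oracle E (paths_L E src dst s t len L) w orc"
    and "1 \<le> i"
    and "\<forall>j<i. pweight (ag_y c orc eps delta j) (orc (ag_y c orc eps delta j)) < 1 + w"
  shows "distL (paths_L E src dst s t len L) (ag_y c orc eps delta i)
           \<le> delta * real L *
             exp (eps * (1 + w) * (\<Sum>P\<in>paths_L E src dst s t len L. ag_x c orc eps delta i P)
                  / lp_beta E c (paths_L E src dst s t len L))"
proof -
  note finE = assms(1) and cpos = assms(2) and lenpos = assms(3)
  note eps = assms(7) and wpos = assms(8) and dpos = assms(9)
  define PL where "PL = paths_L E src dst s t len L"
  define y where "y = ag_y c orc eps delta"
  define Pj where "Pj = (\<lambda>j. orc (y j))"
  define b where "b = (\<lambda>j. bottleneck c (Pj j))"
  define D where "D = (\<lambda>j. \<Sum>e\<in>E. c e * y j e)"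
  define \<alpha> where "\<alpha> = (\<lambda>j. distL PL (y j))"
  define beta where "beta = lp_beta E c PL"
  have orc: "approx_oracle E PL w orc" using assms(10) by (simp add: PL_def)
  have PLne: "PL \<noteq> {}" using assms(6) by (simp add: PL_def)
  have PLprop: "P \<noteq> [] \<and> set P \<subseteq> E \<and> distinct P \<and> length P \<le> L" if "P \<in> PL" for P
  proof -
    from that have st: "is_st_path E src dst s t P" and sl: "(\<Sum>e\<leftarrow>P. len e) \<le> L"
      by (auto simp: PL_def paths_L_def)
    then have d: "distinct (map src P)" and ne: "P \<noteq> []" and sub: "set P \<subseteq> E"
      by (auto simp: is_st_path_def)
    from d have "distinct P" by (simp add: distinct_map)
    moreover have "length P \<le> (\<Sum>e\<leftarrow>P. len e)"
      using sub lenpos by (intro length_le_sumlen) auto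
    ultimately show ?thesis using ne sub sl by simp
  qed
  have finPL: "finite PL"
  proof (rule finite_subset)
    show "PL \<subseteq> {xs. set xs \<subseteq> E \<and> length xs \<le> L}" using PLprop by auto
    show "finite {xs. set xs \<subseteq> E \<and> length xs \<le> L}" using finE by (rule finite_lists_length_le)
  qed
  have dist_in: "distL PL Y \<in> pweight Y ` PL" for Y
    unfolding distL_def using finPL PLne by (intro Min_in) auto
  have dist_le: "distL PL Y \<le> pweight Y Q" if "Q \<in> PL" for Y Q
    unfolding distL_def using finPL that by (intro Min_le) auto
  define S where "S = {(\<Sum>e\<in>E. c e * y e) | y.
      (\<forall>e\<in>E. 0 \<le> y e) \<and> (\<forall>P\<in>PL. 1 \<le> pweight y P)}"
  have beta_S: "beta = Inf S" by (simp add: beta_def lp_beta_def S_def)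
  have bddS: "bdd_below S"
    unfolding S_def bdd_below_def
    using cpos by (intro exI[of _ 0]) (auto intro!: sum_nonneg)
  have beta_le: "beta \<le> (\<Sum>e\<in>E. c e * Y e)"
    if "\<forall>e\<in>E. 0 \<le> Y e" "\<forall>P\<in>PL. 1 \<le> pweight Y P" for Y
    unfolding beta_S using that bddS by (intro cInf_lower) (auto simp: S_def)
  obtain P0 where P0: "P0 \<in> PL" using PLne by auto
  have Ene: "E \<noteq> {}" using PLprop[OF P0] by (cases P0) auto
  define cmin where "cmin = Min (c ` E)"
  have cmin_pos: "0 < cmin" unfolding cmin_def using finE Ene cpos by auto
  have cmin_le: "e \<in> E \<Longrightarrow> cmin \<le> c e" for e unfolding cmin_def using finE by auto
  have Sne: "S \<noteq> {}"
  proof -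
    have "\<forall>P\<in>PL. 1 \<le> pweight (\<lambda>_. 1) P"
    proof
      fix P assume "P \<in> PL"
      then have "P \<noteq> []" "distinct P" using PLprop by auto
      then show "1 \<le> pweight (\<lambda>_. 1) P" by (simp add: pw_set card_gt_0_iff Suc_le_eq)
    qed
    then show ?thesis unfolding S_def by (auto intro!: exI[of _ "\<lambda>_. 1"])
  qed
  have beta_pos: "0 < beta"
  proof -
    have "cmin \<le> beta" unfolding beta_S
    proof (rule cInf_greatest[OF Sne])
      fix x assume "x \<in> S"
      then obtain Y where x: "x = (\<Sum>e\<in>E. c e * Y e)" and Y0: "\<forall>e\<in>E. 0 \<le> Y e"
        and Yf: "\<forall>P\<in>PL. 1 \<le> pweight Y P" unfolding S_def by auto
      have sP0: "set P0 \<subseteq> E" "distinct P0" using PLprop[OF P0] by auto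
      have "cmin \<le> cmin * pweight Y P0" using Yf P0 cmin_pos by simp
      also have "\<dots> = (\<Sum>e\<in>set P0. cmin * Y e)" using sP0 by (simp add: pw_set sum_distrib_left)
      also have "\<dots> \<le> (\<Sum>e\<in>E. cmin * Y e)"
        using sP0 finE Y0 cmin_pos by (intro sum_mono2) auto
      also have "\<dots> \<le> (\<Sum>e\<in>E. c e * Y e)"
        using Y0 cmin_le by (intro sum_mono mult_right_mono) auto
      finally show "cmin \<le> x" using x by simp
    qed
    then show ?thesis using cmin_pos by simp
  qed
  have ystep: "y (Suc j) = (\<lambda>e. if e \<in> set (Pj j) then y j e * (1 + eps * b j / c e) else y j e)" for j
    unfolding y_def Pj_def b_def by (simp add: Let_def)
  have inv: "\<forall>e\<in>E. delta \<le> y j e" for j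
  proof (induction j)
    case 0 then show ?case by (simp add: y_def)
  next
    case (Suc j)
    then have "\<forall>e\<in>E. 0 \<le> y j e" using dpos by force
    then have "Pj j \<in> PL" using orc by (simp add: approx_oracle_def Pj_def)
    then have sP: "set (Pj j) \<subseteq> E" "Pj j \<noteq> []" using PLprop by auto
    then have bpos: "0 < b j" unfolding b_def bottleneck_def using cpos by auto
    show ?case
    proof
      fix e assume e: "e \<in> E"
      have "y j e \<le> y (Suc j) e"
      proof (cases "e \<in> set (Pj j)")
        case True
        have "0 < c e" using cpos e by auto
        then have "0 \<le> eps * b j / c e" using eps bpos by (auto intro!: divide_nonneg_pos mult_nonneg_nonneg)
        then have "y j e * 1 \<le> y j e * (1 + eps * b j / c e)"
          using Suc e dpos by (intro mult_left_mono) force+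
        then show ?thesis using True ystep by simp
      qed (simp add: ystep)
      then show "delta \<le> y (Suc j) e" using Suc e by force
    qed
  qed
  have ynn: "\<forall>e\<in>E. 0 \<le> y j e" for j using inv[of j] dpos by (meson less_imp_le order_trans)
  have PjPL: "Pj j \<in> PL" for j using orc ynn by (simp add: approx_oracle_def Pj_def)
  have Pjw: "pweight (y j) (Pj j) \<le> (1 + w) * \<alpha> j" for j
    using orc ynn by (simp add: approx_oracle_def Pj_def \<alpha>_def)
  have bpos: "0 < b j" for j
    using PLprop[OF PjPL[of j]] cpos unfolding b_def bottleneck_def by auto
  have Dstep: "D (Suc j) = D j + eps * b j * pweight (y j) (Pj j)" for j
  proof -
    have sP: "set (Pj j) \<subseteq> E" "distinct (Pj j)" using PLprop[OF PjPL[of j]] by auto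
    have "D (Suc j) = (\<Sum>e\<in>E. c e * y j e + (if e \<in> set (Pj j) then eps * b j * y j e else 0))"
      unfolding D_def ystep
      by (rule sum.cong) (use cpos in \<open>auto simp: field_simps\<close>)
    also have "\<dots> = D j + (\<Sum>e\<in>E \<inter> set (Pj j). eps * b j * y j e)"
      by (simp add: sum.distrib D_def sum.inter_restrict[OF finE])
    also have "E \<inter> set (Pj j) = set (Pj j)" using sP by auto
    finally show ?thesis using sP by (simp add: pw_set sum_distrib_left)
  qed
  have Dbound: "D j - D 0 \<le> eps * (1 + w) * (\<Sum>k<j. b k * \<alpha> k)" for j
  proof (induction j)
    case 0 then show ?case by simp
  next
    case (Suc j)
    have "eps * b j * pweight (y j) (Pj j) \<le> eps * b j * ((1 + w) * \<alpha> j)"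
      using Pjw eps bpos by (intro mult_left_mono) (auto intro: less_imp_le)
    then show ?case using Suc Dstep[of j] by (simp add: algebra_simps)
  qed
  have D0diff: "D j - D 0 = (\<Sum>e\<in>E. c e * (y j e - delta))" for j
    by (simp add: D_def y_def sum_subtractf algebra_simps)
  have alpha_bound: "\<alpha> j \<le> delta * L + (D j - D 0) / beta" for j
  proof -
    define Y' where "Y' = (\<lambda>e. y j e - delta)"
    have Y'nn: "\<forall>e\<in>E. 0 \<le> Y' e" using inv by (simp add: Y'_def)
    obtain Q where Q: "Q \<in> PL" and dQ: "distL PL Y' = pweight Y' Q" using dist_in by force
    have sQ: "set Q \<subseteq> E" "distinct Q" "length Q \<le> L" using PLprop[OF Q] by auto
    define d where "d = distL PL Y'"
    have d0: "0 \<le> d" unfolding d_def dQ using sQ Y'nn by (simp add: pw_set) (intro sum_nonneg, auto)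
    have CY: "0 \<le> (\<Sum>e\<in>E. c e * Y' e)" using Y'nn cpos by (intro sum_nonneg) (auto intro: less_imp_le)
    have dle: "d \<le> (\<Sum>e\<in>E. c e * Y' e) / beta"
    proof (cases "d = 0")
      case True then show ?thesis using CY beta_pos by simp
    next
      case False
      with d0 have dp: "0 < d" by simp
      have "beta \<le> (\<Sum>e\<in>E. c e * (Y' e / d))"
      proof (rule beta_le)
        show "\<forall>e\<in>E. 0 \<le> Y' e / d" using Y'nn dp by simp
        show "\<forall>P\<in>PL. 1 \<le> pweight (\<lambda>e. Y' e / d) P"
        proof
          fix P assume P: "P \<in> PL"
          have "d \<le> pweight Y' P" unfolding d_def using dist_le[OF P] .
          moreover have "pweight (\<lambda>e. Y' e / d) P = pweight Y' P / d"
            using PLprop[OF P] by (simp add: pw_set sum_divide_distrib)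
          ultimately show "1 \<le> pweight (\<lambda>e. Y' e / d) P" using dp by simp
        qed
      qed
      also have "\<dots> = (\<Sum>e\<in>E. c e * Y' e) / d" by (simp add: sum_divide_distrib)
      finally have "beta * d \<le> (\<Sum>e\<in>E. c e * Y' e)" using dp by (simp add: field_simps)
      then show ?thesis using beta_pos by (simp add: field_simps mult.commute)
    qed
    have "\<alpha> j \<le> pweight (y j) Q" unfolding \<alpha>_def by (rule dist_le[OF Q])
    also have "\<dots> = pweight Y' Q + delta * length Q"
      using sQ by (simp add: pw_set Y'_def sum_subtractf distinct_card)
    also have "\<dots> \<le> d + delta * L" using sQ dpos by (simp add: d_def dQ)
    also have "\<dots> \<le> (D j - D 0) / beta + delta * L" using dle D0diff[of j] by (simp add: Y'_def)
    finally show ?thesis by simp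
  qed
  define a where "a = eps * (1 + w) / beta"
  have a0: "0 \<le> a" using eps wpos beta_pos by (simp add: a_def)
  define z where "z = (\<lambda>j. delta * L + a * (\<Sum>k<j. b k * \<alpha> k))"
  have alpha_z: "\<alpha> j \<le> z j" for j
  proof -
    have "(D j - D 0) / beta \<le> eps * (1 + w) * (\<Sum>k<j. b k * \<alpha> k) / beta"
      using Dbound beta_pos by (intro divide_right_mono) (auto intro: less_imp_le)
    then show ?thesis using alpha_bound[of j] by (simp add: z_def a_def)
  qed
  have z_bound: "z j \<le> delta * L * exp (a * (\<Sum>k<j. b k))" for j
  proof (induction j)
    case 0 then show ?case by (simp add: z_def)
  next
    case (Suc j)
    have ab: "0 \<le> a * b j" using a0 bpos by (simp add: less_imp_le)
    have "z (Suc j) = z j + a * b j * \<alpha> j" by (simp add: z_def algebra_simps)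
    also have "\<dots> \<le> z j + a * b j * z j" using alpha_z ab by (intro add_left_mono mult_left_mono) auto
    also have "\<dots> = z j * (1 + a * b j)" by (simp add: algebra_simps)
    also have "\<dots> \<le> (delta * L * exp (a * (\<Sum>k<j. b k))) * exp (a * b j)"
      using Suc ab dpos by (intro mult_mono exp_ge_add_one_self_aux) auto
    also have "\<dots> = delta * L * exp (a * (\<Sum>k<Suc j. b k))"
      by (simp add: exp_add[symmetric] algebra_simps)
    finally show ?case .
  qed
  have xsum: "(\<Sum>P\<in>PL. ag_x c orc eps delta j P) = (\<Sum>k<j. b k)" for j
  proof (induction j)
    case 0 then show ?case by simp
  next
    case (Suc j)
    have "ag_x c orc eps delta (Suc j) = (ag_x c orc eps delta j)(Pj j := ag_x c orc eps delta j (Pj j) + b j)"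
      by (simp add: Let_def Pj_def y_def b_def)
    then show ?case using Suc sum_upd_in[OF finPL PjPL[of j]] by simp
  qed
  have "\<alpha> i \<le> delta * L * exp (a * (\<Sum>P\<in>PL. ag_x c orc eps delta i P))"
    using alpha_z[of i] z_bound[of i] xsum[of i] by simp
  then show ?thesis by (simp add: \<alpha>_def PL_def y_def a_def beta_def)
qed

end
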